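(* Let $\mathcal{P}\subseteq\mathbb{Z}_{\geq0}$ with $0\in\mathcal{P}$ and $\mathcal{P}-2\neq\emptyset$. Then for all $k\ge0$, $\tau_k^\mathcal{P}<\tau_{k+1}^\mathcal{P}<\tau_\mathcal{P}$, and the sequence $(\tau_k^\mathcal{P})_{k\ge0}$ converges to $\tau_\mathcal{P}$.
   Context: $e_\mathcal{P}(z)=\sum_{n\in\mathcal{P}}z^n/n!$; $\mathcal{P}-2=\{n-2:n\in\mathcal{P},n\ge2\}$. $\tau_\mathcal{P}$ is the unique $\tau\in\mathbb{R}_{>0}$ with $e_\mathcal{P}(\tau)-\tau e_\mathcal{P}'(\tau)=0$, and $\rho_\mathcal{P}=\tau_\mathcal{P}/e_\mathcal{P}(\tau_\mathcal{P})$. Define power series $T^\mathcal{P}_{\le h}(z)$ by $T^\mathcal{P}_{\le -1}(z)=0$ and $T^\mathcal{P}_{\le h}(z)=z\,e_\mathcal{P}(T^\mathcal{P}_{\le h-1}(z))$ for $h\ge0$ (these are entire functions; $T^\mathcal{P}_{\le h}$ is the exponential generating function of labeled rooted trees of height at most $h$ in which every vertex has a number of children in $\mathcal{P}$). Then $\tau_k^\mathcal{P}=T^\mathcal{P}_{\le k-1}(\rho_\mathcal{P})$; equivalently $\tau_0^\mathcal{P}=0$ and $\tau_{k+1}^\mathcal{P}=\rho_\mathcal{P}e_\mathcal{P}(\tau_k^\mathcal{P})$. *)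

theory Defs
  imports "HOL-Analysis.Analysis"
begin

definition eP :: "nat set \<Rightarrow> real \<Rightarrow> real" where
  "eP P z = (\<Sum>n. if n \<in> P then z ^ n / fact n else 0)"

definition tauP :: "nat set \<Rightarrow> real" where
  "tauP P = (THE t. t > 0 \<and> eP P t - t * deriv (eP P) t = 0)"

definition rhoP :: "nat set \<Rightarrow> real" where
  "rhoP P = tauP P / eP P (tauP P)"

text \<open>T_{\<le>h}(z): T_{\<le>-1} = 0, T_{\<le>h} = z e_P(T_{\<le>h-1}); indexed with shift so
  Tle P k z = T_{\<le>k-1}(z).\<close>
primrec Tle :: "nat set \<Rightarrow> nat \<Rightarrow> real \<Rightarrow> real" where
  "Tle P 0 z = 0"
| "Tle P (Suc k) z = z * eP P (Tle P k z)"

definition tauk :: "nat set \<Rightarrow> nat \<Rightarrow> real" where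
  "tauk P k = Tle P k (rhoP P)"

end

theory Submission
  imports Defs
begin

lemma suminf_strict_less:
  fixes f g :: "nat \<Rightarrow> real"
  assumes "summable f" "summable g" "\<And>n. f n \<le> g n" "f i < g i"
  shows "suminf f < suminf g"
proof -
  have "0 < suminf (\<lambda>n. g n - f n)"
    using assms by (subst suminf_pos_iff) (auto intro: summable_diff)
  also have "\<dots> = suminf g - suminf f" using assms by (simp add: suminf_diff)
  finally show ?thesis by simp
qed

definition cf :: "nat set \<Rightarrow> nat \<Rightarrow> real" where
  "cf P n = (if n \<in> P then inverse (fact n) else 0)"

definition Ed :: "nat set \<Rightarrow> real \<Rightarrow> real" where
  "Ed P z = (\<Sum>n. diffs (cf P) n * z ^ n)"

lemma eP_eq: "eP P = (\<lambda>z. \<Sum>n. cf P n * z ^ n)"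
  by (rule ext, unfold eP_def cf_def, rule suminf_cong) (simp add: divide_inverse mult.commute)

lemma cf_summable: "summable (\<lambda>n. cf P n * z ^ n)"
proof (rule summable_comparison_test[OF _ summable_exp[of "\<bar>z\<bar>"]])
  show "\<exists>N. \<forall>n\<ge>N. norm (cf P n * z ^ n) \<le> inverse (fact n) * \<bar>z\<bar> ^ n"
    by (auto simp: cf_def abs_mult power_abs)
qed

lemma Ed_summable: "summable (\<lambda>n. diffs (cf P) n * z ^ n)"
  by (rule termdiff_converges_all) (rule cf_summable)

lemma eP_deriv: "(eP P has_field_derivative Ed P z) (at z)"
  unfolding eP_eq Ed_def
  by (rule termdiffs_strong[OF cf_summable[of P "\<bar>z\<bar> + 1"]]) simp

lemma deriv_eP: "deriv (eP P) z = Ed P z"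
  using eP_deriv DERIV_imp_deriv by blast

lemma isCont_eP: "isCont (eP P) z"
  using eP_deriv DERIV_isCont by blast

lemma isCont_Ed: "isCont (Ed P) z"
  unfolding Ed_def
  by (rule isCont_powser[OF Ed_summable[of P "\<bar>z\<bar> + 1"]]) simp

lemma eP_sums: "(\<lambda>n. cf P n * z ^ n) sums eP P z"
  using cf_summable[of P z] by (simp add: eP_eq summable_sums)

lemma tEd_sums: "(\<lambda>n. real n * cf P n * t ^ n) sums (t * Ed P t)"
proof -
  have "(\<lambda>n. t * (diffs (cf P) n * t ^ n)) sums (t * Ed P t)"
    unfolding Ed_def by (rule sums_mult) (rule summable_sums[OF Ed_summable])
  moreover have "(\<lambda>n. t * (diffs (cf P) n * t ^ n)) = (\<lambda>n. real (Suc n) * cf P (Suc n) * t ^ Suc n)"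
    by (rule ext) (simp add: diffs_def)
  ultimately have "(\<lambda>n. real (Suc n) * cf P (Suc n) * t ^ Suc n) sums (t * Ed P t)" by simp
  then show ?thesis by (subst (asm) sums_Suc_iff) simp
qed

lemma eP_zero: "0 \<in> P \<Longrightarrow> eP P 0 = 1"
  by (simp add: eP_eq cf_def)

lemma cf_nonneg: "0 \<le> cf P n" by (simp add: cf_def)

lemma eP_mono:
  assumes "n0 \<in> P" "n0 \<ge> 1" "0 \<le> x" "x < y"
  shows "eP P x < eP P y"
  unfolding eP_eq
proof (rule suminf_strict_less[OF cf_summable cf_summable])
  show "cf P n * x ^ n \<le> cf P n * y ^ n" for n
    using assms by (intro mult_left_mono power_mono cf_nonneg) auto
  show "cf P n0 * x ^ n0 < cf P n0 * y ^ n0"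
    using assms by (intro mult_strict_left_mono power_strict_mono) (auto simp: cf_def)
qed


lemma f_sums: "(\<lambda>n. (1 - real n) * cf P n * t ^ n) sums (eP P t - t * Ed P t)"
proof -
  have "(\<lambda>n. cf P n * t ^ n - real n * cf P n * t ^ n) sums (eP P t - t * Ed P t)"
    by (rule sums_diff[OF eP_sums tEd_sums])
  then show ?thesis by (simp add: algebra_simps)
qed

lemma f_decr:
  assumes "n0 \<in> P" "n0 \<ge> 2" "0 \<le> s" "s < t"
  shows "eP P t - t * Ed P t < eP P s - s * Ed P s"
proof -
  have "(\<Sum>n. (1 - real n) * cf P n * t ^ n) < (\<Sum>n. (1 - real n) * cf P n * s ^ n)"
  proof (rule suminf_strict_less[OF sums_summable[OF f_sums] sums_summable[OF f_sums]])
    show "(1 - real n) * cf P n * t ^ n \<le> (1 - real n) * cf P n * s ^ n" for n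
    proof (cases n)
      case 0 then show ?thesis by simp
    next
      case (Suc m)
      have "s ^ n \<le> t ^ n" using assms by (intro power_mono) auto
      moreover have "(1 - real n) * cf P n \<le> 0" using Suc by (simp add: cf_def mult_nonpos_nonneg)
      ultimately show ?thesis by (simp add: mult_left_mono_neg)
    qed
    have "s ^ n0 < t ^ n0" using assms by (intro power_strict_mono) auto
    moreover have "(1 - real n0) * cf P n0 < 0" using assms by (simp add: cf_def mult_neg_pos)
    ultimately show "(1 - real n0) * cf P n0 * t ^ n0 < (1 - real n0) * cf P n0 * s ^ n0"
      by (simp add: mult_strict_left_mono_neg)
  qed
  then show ?thesis using f_sums[THEN sums_unique] by metis
qed

lemma f_neg:
  assumes "0 \<in> P" "n0 \<in> P" "n0 \<ge> 2"
  shows "eP P (fact n0 + 1) - (fact n0 + 1) * Ed P (fact n0 + 1) < 0"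
proof -
  define T :: real where "T = fact n0 + 1"
  define g where "g n = (if n = 0 then 1 else if n = n0 then (1 - real n0) * cf P n0 * T ^ n0 else 0)" for n
  have "(\<Sum>n. (1 - real n) * cf P n * T ^ n) \<le> suminf g"
  proof (rule suminf_le[OF _ sums_summable[OF f_sums]])
    show "summable g" by (rule summable_finite[of "{0, n0}"]) (auto simp: g_def)
    show "(1 - real n) * cf P n * T ^ n \<le> g n" for n
      using assms by (auto simp: g_def cf_def T_def mult_nonpos_nonneg)
  qed
  also have "suminf g = (\<Sum>n\<in>{0,n0}. g n)" by (rule suminf_finite) (auto simp: g_def)
  also have "\<dots> = 1 + (1 - real n0) * T ^ n0 / fact n0" using assms by (simp add: g_def cf_def divide_inverse)
  also have "\<dots> < 0"
  proof -
    have "T \<le> T ^ n0" using assms by (intro self_le_power) (auto simp: T_def)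
    then have "fact n0 < T ^ n0" by (simp add: T_def)
    then have "1 < T ^ n0 / fact n0" by simp
    moreover have "T ^ n0 / fact n0 \<le> (real n0 - 1) * (T ^ n0 / fact n0)"
      using assms by (intro mult_right_mono[of 1 "real n0 - 1", simplified]) (auto simp: T_def)
    ultimately have "1 < (real n0 - 1) * (T ^ n0 / fact n0)" by linarith
    then show ?thesis by (simp add: algebra_simps diff_divide_distrib)
  qed
  finally show ?thesis using f_sums[THEN sums_unique] T_def by metis
qed


lemma tauP_props:
  assumes "0 \<in> P" "n0 \<in> P" "n0 \<ge> 2"
  shows "tauP P > 0 \<and> eP P (tauP P) = tauP P * Ed P (tauP P)"
proof -
  define F where "F t = eP P t - t * Ed P t" for t
  define T :: real where "T = fact n0 + 1"
  have cont: "continuous_on {0..T} F"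
    unfolding F_def by (intro continuous_at_imp_continuous_on ballI continuous_intros isCont_eP isCont_Ed)
  have F0: "F 0 = 1" using assms by (simp add: F_def eP_zero)
  have FT: "F T < 0" using f_neg[OF assms] by (simp add: F_def T_def)
  obtain t where t: "0 \<le> t" "t \<le> T" "F t = 0"
    using IVT2'[of F T 0 0, OF _ _ _ cont] FT F0 by (auto simp: T_def)
  have tpos: "t > 0" using t F0 by (cases "t = 0") auto
  have ex: "\<exists>!t. t > 0 \<and> eP P t - t * deriv (eP P) t = 0"
  proof (rule ex1I[of _ t])
    show "t > 0 \<and> eP P t - t * deriv (eP P) t = 0" using tpos t by (simp add: deriv_eP F_def)
    fix s assume s: "s > 0 \<and> eP P s - s * deriv (eP P) s = 0"
    then have Fs: "F s = 0" by (simp add: deriv_eP F_def)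
    show "s = t"
    proof (rule ccontr)
      assume "s \<noteq> t"
      then have "s < t \<or> t < s" by auto
      then show False
      proof
        assume "s < t" then show False using f_decr[OF assms(2,3), of s t] s Fs t by (simp add: F_def)
      next
        assume "t < s" then show False using f_decr[OF assms(2,3), of t s] s Fs t by (simp add: F_def)
      qed
    qed
  qed
  have "tauP P > 0 \<and> eP P (tauP P) - tauP P * deriv (eP P) (tauP P) = 0"
    unfolding tauP_def by (rule theI'[OF ex])
  then show ?thesis by (simp add: deriv_eP)
qed

lemma a_nonneg:
  fixes u :: real
  assumes "u \<ge> 0"
  shows "u ^ n - real n * u + real n - 1 \<ge> 0 \<and> (n \<ge> 2 \<longrightarrow> u \<noteq> 1 \<longrightarrow> u ^ n - real n * u + real n - 1 > 0)"
proof (induction n)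
  case 0 then show ?case by simp
next
  case (Suc n)
  define a where "a = u ^ n - real n * u + real n - 1"
  have rec: "u ^ Suc n - real (Suc n) * u + real (Suc n) - 1 = u * a + real n * (u - 1)^2"
    by (simp add: a_def algebra_simps power2_eq_square)
  have an: "a \<ge> 0" using Suc a_def by simp
  have "u * a \<ge> 0" using an assms by simp
  moreover have "n \<ge> 1 \<longrightarrow> u \<noteq> 1 \<longrightarrow> real n * (u - 1)^2 > 0" by auto
  ultimately have "u * a + real n * (u - 1)^2 \<ge> 0 \<and> (Suc n \<ge> 2 \<longrightarrow> u \<noteq> 1 \<longrightarrow> u * a + real n * (u - 1)^2 > 0)"
    by (auto intro: add_nonneg_pos)
  then show ?case unfolding rec by simp
qed

lemma key_ineq:
  assumes "n0 \<in> P" "n0 \<ge> 2" "t > 0" "eP P t = t * Ed P t" "x \<ge> 0" "x \<noteq> t"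
  shows "x * eP P t / t < eP P x"
proof -
  define u where "u = x / t"
  have u: "u \<ge> 0" "u \<noteq> 1" "x = u * t" using assms by (auto simp: u_def)
  define a where "a n = u ^ n - real n * u + real n - 1" for n
  have "(\<lambda>n. cf P n * x ^ n - u * (real n * cf P n * t ^ n) + (real n * cf P n * t ^ n - cf P n * t ^ n))
        sums (eP P x - u * (t * Ed P t) + (t * Ed P t - eP P t))"
    by (intro sums_add sums_diff sums_mult eP_sums tEd_sums)
  moreover have "(\<lambda>n. cf P n * x ^ n - u * (real n * cf P n * t ^ n) + (real n * cf P n * t ^ n - cf P n * t ^ n))
      = (\<lambda>n. cf P n * t ^ n * a n)"
    by (rule ext) (simp add: a_def u(3) power_mult_distrib algebra_simps)
  ultimately have S: "(\<lambda>n. cf P n * t ^ n * a n) sums (eP P x - u * eP P t)"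
    using assms(4) by simp
  have "0 < suminf (\<lambda>n. cf P n * t ^ n * a n)"
  proof (subst suminf_pos_iff)
    show "summable (\<lambda>n. cf P n * t ^ n * a n)" using S by (rule sums_summable)
    show "0 \<le> cf P n * t ^ n * a n" for n
      using a_nonneg[OF u(1), of n] assms(3) by (simp add: a_def cf_nonneg)
    have "0 < cf P n0 * t ^ n0 * a n0"
      using a_nonneg[OF u(1), of n0] assms u by (simp add: a_def cf_def)
    then show "\<exists>i. 0 < cf P i * t ^ i * a i" by blast
  qed
  then have "0 < eP P x - u * eP P t" using S sums_unique by metis
  then show ?thesis by (simp add: u_def)
qed


theorem lemma7p3:
  fixes P :: "nat set"
  assumes "0 \<in> P" and "\<exists>n\<in>P. n \<ge> 2"
  shows "(\<forall>k. tauk P k < tauk P (Suc k) \<and> tauk P (Suc k) < tauP P)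
         \<and> (\<lambda>k. tauk P k) \<longlonglongrightarrow> tauP P"
proof -
  obtain n0 where n0: "n0 \<in> P" "n0 \<ge> 2" using assms(2) by blast
  define t where "t = tauP P"
  define r where "r = rhoP P"
  have tp: "t > 0" "eP P t = t * Ed P t" using tauP_props[OF assms(1) n0] by (auto simp: t_def)
  have e0: "eP P 0 = 1" using assms(1) by (rule eP_zero)
  have et: "eP P t > 1" using eP_mono[OF n0(1) _ order_refl tp(1)] n0 e0 by simp
  have r: "r = t / eP P t" by (simp add: r_def rhoP_def t_def)
  have rpos: "r > 0" using r tp(1) et by simp
  have rt: "r < t" using r tp(1) et by (simp add: divide_less_eq)
  have Gt: "r * eP P t = t" using r et by simp
  have step: "tauk P (Suc k) = r * eP P (tauk P k)" for k by (simp add: tauk_def r_def)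
  have Gmono: "r * eP P a < r * eP P b" if "0 \<le> a" "a < b" for a b
    using eP_mono[OF n0(1) _ that] n0 rpos by simp
  have inv: "0 \<le> tauk P k \<and> tauk P k < tauk P (Suc k) \<and> tauk P (Suc k) < t" for k
  proof (induction k)
    case 0
    have "tauk P 0 = 0" by (simp add: tauk_def)
    moreover have "tauk P (Suc 0) = r" using step[of 0] e0 \<open>tauk P 0 = 0\<close> by simp
    ultimately show ?case using rpos rt by simp
  next
    case (Suc k)
    have "tauk P (Suc (Suc k)) = r * eP P (tauk P (Suc k))" by (rule step)
    moreover have "r * eP P (tauk P k) < r * eP P (tauk P (Suc k))" using Suc Gmono by blast
    moreover have "r * eP P (tauk P (Suc k)) < r * eP P t" using Suc Gmono by fastforce
    ultimately show ?case using Suc step[of k] Gt by auto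
  qed
  have inc: "incseq (tauk P)" using inv by (intro incseq_SucI less_imp_le) auto
  have bnd: "\<forall>i. tauk P i \<le> t" using inv by (meson less_imp_le inc incseq_SucD order_trans)
  obtain L where L: "tauk P \<longlonglongrightarrow> L" "\<forall>i. tauk P i \<le> L"
    using incseq_convergent[OF inc bnd] by blast

  have L0: "L \<ge> 0" using L(2) inv[of 0] by (meson order_trans)
  have "(\<lambda>k. r * eP P (tauk P k)) \<longlonglongrightarrow> r * eP P L"
    by (intro tendsto_mult tendsto_const isCont_tendsto_compose[OF isCont_eP L(1)])
  moreover have "(\<lambda>k. r * eP P (tauk P k)) \<longlonglongrightarrow> L"
    using L(1)[THEN LIMSEQ_Suc] by (simp add: step)
  ultimately have fixL: "r * eP P L = L" using LIMSEQ_unique by blast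
  have "L = t"
  proof (rule ccontr)
    assume "L \<noteq> t"
    then have "L * eP P t / t < eP P L" using key_ineq[OF n0 tp L0] by blast
    then have "L * eP P t < t * eP P L" using tp(1) by (simp add: pos_divide_less_eq mult.commute)
    then have "L < t * eP P L / eP P t" using et by (simp add: pos_less_divide_eq)
    then have "L < r * eP P L" unfolding r by simp
    then show False using fixL by simp
  qed
  then show ?thesis using inv L(1) by (simp add: t_def)
qed

end
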